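(* Let $M$ be a finite monoid and let $J$ be a $\mathscr{J}$-class of $M$. Then the relation $\theta_J$ is a congruence of $M$ and $\theta_J\subseteq\pi_J$.
   Context: Green's relations on $M$: $a\mathscr{L}b$ iff $Ma=Mb$, $a\mathscr{R}b$ iff $aM=bM$, $a\mathscr{H}b$ iff $a\mathscr{L}b$ and $a\mathscr{R}b$, $a\mathscr{J}b$ iff $MaM=MbM$. $J_a$ is the $\mathscr{J}$-class of $a$; $J_a\leqslant_{\mathscr{J}}J_b$ iff $MaM\subseteq MbM$, and $J_a<_{\mathscr{J}}J_b$ iff $J_a\leqslant_{\mathscr{J}}J_b$ and $J_a\neq J_b$. For a $\mathscr{J}$-class $J$, let $A(J)=\{a\in M: J_a<_{\mathscr{J}}J\}$ and $B(J)=\{a\in M: J\not\leqslant_{\mathscr{J}}J_a\}$. Define $a\,\theta_J\, b$ [respectively $a\,\pi_J\,b$] iff $a=b$, or $a,b\in A(J)$ [respectively $a,b\in B(J)$], or $a,b\in J$ and $a\mathscr{H}b$. *)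

theory Defs
  imports Main
begin

text \<open>A finite monoid M is modelled as a type of class monoid_mult and finite
  (the monoid is the whole type; multiplication need not be commutative).\<close>

definition Lideal :: "'a::monoid_mult \<Rightarrow> 'a set" where
  "Lideal a = {x * a | x. True}"

definition Rideal :: "'a::monoid_mult \<Rightarrow> 'a set" where
  "Rideal a = {a * y | y. True}"

definition Jideal :: "'a::monoid_mult \<Rightarrow> 'a set" where
  "Jideal a = {x * a * y | x y. True}"

definition greenL :: "'a::monoid_mult \<Rightarrow> 'a \<Rightarrow> bool" where
  "greenL a b \<longleftrightarrow> Lideal a = Lideal b"

definition greenR :: "'a::monoid_mult \<Rightarrow> 'a \<Rightarrow> bool" where
  "greenR a b \<longleftrightarrow> Rideal a = Rideal b"

definition greenH :: "'a::monoid_mult \<Rightarrow> 'a \<Rightarrow> bool" where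
  "greenH a b \<longleftrightarrow> greenL a b \<and> greenR a b"

definition greenJ :: "'a::monoid_mult \<Rightarrow> 'a \<Rightarrow> bool" where
  "greenJ a b \<longleftrightarrow> Jideal a = Jideal b"

definition Jclass :: "'a::monoid_mult \<Rightarrow> 'a set" where
  "Jclass a = {b. greenJ a b}"

definition is_Jclass :: "'a::monoid_mult set \<Rightarrow> bool" where
  "is_Jclass J \<longleftrightarrow> (\<exists>a. J = Jclass a)"

definition Jclass_le :: "'a::monoid_mult set \<Rightarrow> 'a set \<Rightarrow> bool" where
  "Jclass_le X Y \<longleftrightarrow> (\<exists>a b. X = Jclass a \<and> Y = Jclass b \<and> Jideal a \<subseteq> Jideal b)"

definition Jclass_less :: "'a::monoid_mult set \<Rightarrow> 'a set \<Rightarrow> bool" where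
  "Jclass_less X Y \<longleftrightarrow> Jclass_le X Y \<and> X \<noteq> Y"

definition setA :: "'a::monoid_mult set \<Rightarrow> 'a set" where
  "setA J = {a. Jclass_less (Jclass a) J}"

definition setB :: "'a::monoid_mult set \<Rightarrow> 'a set" where
  "setB J = {a. \<not> Jclass_le J (Jclass a)}"

definition theta :: "'a::monoid_mult set \<Rightarrow> 'a rel" where
  "theta J = {(a, b). a = b \<or> (a \<in> setA J \<and> b \<in> setA J)
                      \<or> (a \<in> J \<and> b \<in> J \<and> greenH a b)}"

definition pi_rel :: "'a::monoid_mult set \<Rightarrow> 'a rel" where
  "pi_rel J = {(a, b). a = b \<or> (a \<in> setB J \<and> b \<in> setB J)
                      \<or> (a \<in> J \<and> b \<in> J \<and> greenH a b)}"

definition congruence :: "'a::monoid_mult rel \<Rightarrow> bool" where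
  "congruence R \<longleftrightarrow> equiv UNIV R \<and>
     (\<forall>a b c. (a, b) \<in> R \<longrightarrow> (c * a, c * b) \<in> R \<and> (a * c, b * c) \<in> R)"

end

theory Submission
  imports Defs
begin

lemma J_mem: "(a::'a::monoid_mult) \<in> Jideal a"
  unfolding Jideal_def by (rule CollectI, rule exI[of _ 1], rule exI[of _ 1]) simp

lemma J_le_iff: "Jideal b \<subseteq> Jideal (a::'a::monoid_mult) \<longleftrightarrow> b \<in> Jideal a"
proof
  assume "Jideal b \<subseteq> Jideal a" thus "b \<in> Jideal a" using J_mem by blast
next
  assume "b \<in> Jideal a"
  then obtain x y where b: "b = x * a * y" unfolding Jideal_def by blast
  show "Jideal b \<subseteq> Jideal a"
  proof
    fix z assume "z \<in> Jideal b"
    then obtain u v where "z = u * b * v" unfolding Jideal_def by blast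
    hence "z = (u * x) * a * (y * v)" using b by (simp add: mult.assoc)
    thus "z \<in> Jideal a" unfolding Jideal_def by blast
  qed
qed

lemma L_mem: "(a::'a::monoid_mult) \<in> Lideal a"
  unfolding Lideal_def by (rule CollectI, rule exI[of _ 1]) simp

lemma L_le_iff: "Lideal b \<subseteq> Lideal (a::'a::monoid_mult) \<longleftrightarrow> b \<in> Lideal a"
proof
  assume "Lideal b \<subseteq> Lideal a" thus "b \<in> Lideal a" using L_mem by blast
next
  assume "b \<in> Lideal a"
  then obtain x where b: "b = x * a" unfolding Lideal_def by blast
  show "Lideal b \<subseteq> Lideal a"
  proof
    fix z assume "z \<in> Lideal b"
    then obtain u where "z = u * b" unfolding Lideal_def by blast
    hence "z = (u * x) * a" using b by (simp add: mult.assoc)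
    thus "z \<in> Lideal a" unfolding Lideal_def by blast
  qed
qed

lemma R_mem: "(a::'a::monoid_mult) \<in> Rideal a"
  unfolding Rideal_def by (rule CollectI, rule exI[of _ 1]) simp

lemma R_le_iff: "Rideal b \<subseteq> Rideal (a::'a::monoid_mult) \<longleftrightarrow> b \<in> Rideal a"
proof
  assume "Rideal b \<subseteq> Rideal a" thus "b \<in> Rideal a" using R_mem by blast
next
  assume "b \<in> Rideal a"
  then obtain x where b: "b = a * x" unfolding Rideal_def by blast
  show "Rideal b \<subseteq> Rideal a"
  proof
    fix z assume "z \<in> Rideal b"
    then obtain u where "z = b * u" unfolding Rideal_def by blast
    hence "z = a * (x * u)" using b by (simp add: mult.assoc)
    thus "z \<in> Rideal a" unfolding Rideal_def by blast
  qed
qed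

lemma R_left_compat:
  assumes "Rideal a = Rideal (b::'a::monoid_mult)"
  shows "Rideal (c * a) = Rideal (c * b)"
proof -
  have "a \<in> Rideal b" "b \<in> Rideal a" using assms R_mem by blast+
  then obtain x y where e: "a = b * x" "b = a * y" unfolding Rideal_def by blast
  have "c * a = (c * b) * x" using e(1) by (simp add: mult.assoc)
  moreover have "c * b = (c * a) * y" using e(2) by (simp add: mult.assoc)
  ultimately have "c * a \<in> Rideal (c * b)" "c * b \<in> Rideal (c * a)"
    unfolding Rideal_def by blast+
  thus ?thesis using R_le_iff by blast
qed

lemma L_right_compat:
  assumes "Lideal a = Lideal (b::'a::monoid_mult)"
  shows "Lideal (a * c) = Lideal (b * c)"
proof -
  have "a \<in> Lideal b" "b \<in> Lideal a" using assms L_mem by blast+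
  then obtain x y where e: "a = x * b" "b = y * a" unfolding Lideal_def by blast
  have "a * c = x * (b * c)" using e(1) by (simp add: mult.assoc)
  moreover have "b * c = y * (a * c)" using e(2) by (simp add: mult.assoc)
  ultimately have "a * c \<in> Lideal (b * c)" "b * c \<in> Lideal (a * c)"
    unfolding Lideal_def by blast+
  thus ?thesis using L_le_iff by blast
qed

lemma R_J:
  assumes "Rideal a = Rideal (b::'a::monoid_mult)"
  shows "Jideal a = Jideal b"
proof -
  have "a \<in> Rideal b" "b \<in> Rideal a" using assms R_mem by blast+
  then obtain x y where "a = b * x" "b = a * y" unfolding Rideal_def by blast
  hence "a \<in> Jideal b" "b \<in> Jideal a" unfolding Jideal_def
    by (metis (mono_tags, lifting) CollectI mult_1_left)+
  thus ?thesis using J_le_iff by blast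
qed

lemma L_J:
  assumes "Lideal a = Lideal (b::'a::monoid_mult)"
  shows "Jideal a = Jideal b"
proof -
  have "a \<in> Lideal b" "b \<in> Lideal a" using assms L_mem by blast+
  then obtain x y where "a = x * b" "b = y * a" unfolding Lideal_def by blast
  hence "a \<in> Jideal b" "b \<in> Jideal a" unfolding Jideal_def
    by (metis (mono_tags, lifting) CollectI mult_1_right)+
  thus ?thesis using J_le_iff by blast
qed

lemma rep: "\<exists>m k. k > 0 \<and> (f::nat \<Rightarrow> 'a::finite) m = f (m + k)"
proof -
  have "\<not> inj f"
  proof
    assume "inj f"
    hence "infinite (range f)" using finite_imageD infinite_UNIV_nat by blast
    thus False by simp
  qed
  then obtain i j where "i \<noteq> j" "f i = f j" unfolding inj_def by blast
  show ?thesis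
  proof (cases "i < j")
    case True
    hence "j - i > 0 \<and> f i = f (i + (j - i))" using \<open>f i = f j\<close> by simp
    thus ?thesis by blast
  next
    case False
    hence "i - j > 0 \<and> f j = f (j + (i - j))" using \<open>f i = f j\<close> \<open>i \<noteq> j\<close> by simp
    thus ?thesis by blast
  qed
qed

lemma stabL:
  assumes "Jideal (c * a) = Jideal (a::'a::{monoid_mult,finite})"
  shows "Lideal (c * a) = Lideal a"
proof -
  have "a \<in> Jideal (c * a)" using assms J_mem by blast
  then obtain x y where a: "a = x * (c * a) * y" unfolding Jideal_def by blast
  have pw: "a = (x * c) ^ n * a * y ^ n" for n
  proof (induction n)
    case 0 then show ?case by simp
  next
    case (Suc n)
    have "a = (x * c) ^ n * (x * (c * a) * y) * y ^ n" using Suc a by simp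
    also have "\<dots> = (x * c) ^ n * (x * c) * a * (y * y ^ n)" by (simp add: mult.assoc)
    finally show ?case by (simp only: power_Suc2[of "x * c"] power_Suc[of y])
  qed
  obtain m k where k: "k > 0" "(x * c) ^ m = (x * c) ^ (m + k)"
    using rep[of "\<lambda>n. (x * c) ^ n"] by blast
  have "(x * c) ^ k * a = (x * c) ^ k * ((x * c) ^ m * a * y ^ m)" using pw[of m] by simp
  also have "\<dots> = ((x * c) ^ k * (x * c) ^ m) * a * y ^ m"
    by (simp add: mult.assoc)
  also have "\<dots> = (x * c) ^ (m + k) * a * y ^ m"
    by (simp only: add.commute[of m k] power_add)
  also have "\<dots> = a" using k pw[of m] by simp
  finally have e: "(x * c) ^ k * a = a" .
  obtain k' where "k = Suc k'" using k by (cases k) auto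
  hence "a = ((x * c) ^ k' * x) * (c * a)" using e
    by (metis mult.assoc power_Suc2)
  hence "a \<in> Lideal (c * a)" unfolding Lideal_def by blast
  moreover have "c * a \<in> Lideal a" unfolding Lideal_def by blast
  ultimately show ?thesis using L_le_iff by blast
qed

lemma stabR:
  assumes "Jideal (a * c) = Jideal (a::'a::{monoid_mult,finite})"
  shows "Rideal (a * c) = Rideal a"
proof -
  have "a \<in> Jideal (a * c)" using assms J_mem by blast
  then obtain x y where a: "a = x * (a * c) * y" unfolding Jideal_def by blast
  have pw: "a = x ^ n * a * (c * y) ^ n" for n
  proof (induction n)
    case 0 then show ?case by simp
  next
    case (Suc n)
    have "a = x ^ n * (x * (a * c) * y) * (c * y) ^ n" using Suc a by simp
    also have "\<dots> = (x ^ n * x) * a * ((c * y) * (c * y) ^ n)" by (simp add: mult.assoc)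
    finally show ?case by (simp only: power_Suc2[of x] power_Suc[of "c * y"])
  qed
  obtain m k where k: "k > 0" "(c * y) ^ m = (c * y) ^ (m + k)"
    using rep[of "\<lambda>n. (c * y) ^ n"] by blast
  have "a * (c * y) ^ k = (x ^ m * a * (c * y) ^ m) * (c * y) ^ k" using pw[of m] by simp
  also have "\<dots> = x ^ m * a * (c * y) ^ (m + k)"
    by (simp add: mult.assoc power_add)
  also have "\<dots> = a" using k pw[of m] by simp
  finally have e: "a * (c * y) ^ k = a" .
  obtain k' where "k = Suc k'" using k by (cases k) auto
  hence "a = (a * c) * (y * (c * y) ^ k')" using e
    by (metis mult.assoc power_Suc)
  hence "a \<in> Rideal (a * c)" unfolding Rideal_def by blast
  moreover have "a * c \<in> Rideal a" unfolding Rideal_def by blast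
  ultimately show ?thesis using R_le_iff by blast
qed

lemma Jclass_eq: "Jclass a = Jclass b \<longleftrightarrow> Jideal a = Jideal (b::'a::monoid_mult)"
  unfolding Jclass_def greenJ_def by auto

lemma Jclass_le_iff: "Jclass_le (Jclass a) (Jclass b) \<longleftrightarrow> Jideal a \<subseteq> Jideal (b::'a::monoid_mult)"
  unfolding Jclass_le_def Jclass_eq by auto

lemma setA_eq: "setA (Jclass j) = {a. Jideal a \<subset> Jideal (j::'a::monoid_mult)}"
  unfolding setA_def Jclass_less_def Jclass_le_iff Jclass_eq by auto

lemma setB_eq: "setB (Jclass j) = {a. \<not> Jideal j \<subseteq> Jideal (a::'a::monoid_mult)}"
  unfolding setB_def Jclass_le_iff by simp

lemma Jclass_mem: "a \<in> Jclass j \<longleftrightarrow> Jideal a = Jideal j"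
  unfolding Jclass_def greenJ_def by auto

lemma sub_mul: "Jideal (c * a * d) \<subseteq> Jideal (a::'a::monoid_mult)"
proof -
  have "c * a * d \<in> Jideal a" unfolding Jideal_def by blast
  thus ?thesis using J_le_iff by blast
qed

lemma tr_abs:
  fixes Ji :: "'a \<Rightarrow> 'b set"
  assumes "x = y \<or> (Ji x \<subset> Jj \<and> Ji y \<subset> Jj) \<or> (Ji x = Jj \<and> Ji y = Jj \<and> (Li x = Li y \<and> Ri x = Ri y))"
   "y = z \<or> (Ji y \<subset> Jj \<and> Ji z \<subset> Jj) \<or> (Ji y = Jj \<and> Ji z = Jj \<and> (Li y = Li z \<and> Ri y = Ri z))"
 shows "x = z \<or> (Ji x \<subset> Jj \<and> Ji z \<subset> Jj) \<or> (Ji x = Jj \<and> Ji z = Jj \<and> (Li x = Li z \<and> Ri x = Ri z))"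
  using assms by (elim disjE conjE) (simp_all, blast?)

lemma sy_abs:
  fixes Ji :: "'a \<Rightarrow> 'b set"
  assumes "x = y \<or> (Ji x \<subset> Jj \<and> Ji y \<subset> Jj) \<or> (Ji x = Jj \<and> Ji y = Jj \<and> (Li x = Li y \<and> Ri x = Ri y))"
 shows "y = x \<or> (Ji y \<subset> Jj \<and> Ji x \<subset> Jj) \<or> (Ji y = Jj \<and> Ji x = Jj \<and> (Li y = Li x \<and> Ri y = Ri x))"
  using assms by auto

theorem lemma3p4:
  fixes J :: "'a::{monoid_mult, finite} set"
  assumes "is_Jclass J"
  shows "congruence (theta J) \<and> theta J \<subseteq> pi_rel J"
proof -
  obtain j where J: "J = Jclass j" using assms is_Jclass_def by blast
  have th: "(a, b) \<in> theta J \<longleftrightarrow> a = b \<or> (Jideal a \<subset> Jideal j \<and> Jideal b \<subset> Jideal j)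
     \<or> (Jideal a = Jideal j \<and> Jideal b = Jideal j \<and> greenH a b)" for a b
    unfolding theta_def J setA_eq Jclass_mem by simp
  have sub: "theta J \<subseteq> pi_rel J"
    unfolding theta_def pi_rel_def J setA_eq setB_eq by auto
  have r: "(x, x) \<in> theta J" for x using th by blast
  have sy: "(y, x) \<in> theta J" if "(x, y) \<in> theta J" for x y
    using that unfolding th greenH_def greenL_def greenR_def by (rule sy_abs[where Ji=Jideal and Li=Lideal and Ri=Rideal])
  have tr: "(x, z) \<in> theta J" if "(x, y) \<in> theta J" "(y, z) \<in> theta J" for x y z
  proof -
    have A: "x = y \<or> (Jideal x \<subset> Jideal j \<and> Jideal y \<subset> Jideal j) \<or> (Jideal x = Jideal j \<and> Jideal y = Jideal j \<and> (Lideal x = Lideal y \<and> Rideal x = Rideal y))"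
      using that(1) unfolding th greenH_def greenL_def greenR_def .
    have B: "y = z \<or> (Jideal y \<subset> Jideal j \<and> Jideal z \<subset> Jideal j) \<or> (Jideal y = Jideal j \<and> Jideal z = Jideal j \<and> (Lideal y = Lideal z \<and> Rideal y = Rideal z))"
      using that(2) unfolding th greenH_def greenL_def greenR_def .
    show ?thesis unfolding th greenH_def greenL_def greenR_def by (rule tr_abs[OF A B])
  qed
  have eq: "equiv UNIV (theta J)"
  proof (rule equivI)
    show "refl_on UNIV (theta J)" by (rule refl_onI) (rule r)
    show "sym (theta J)" by (rule symI) (rule sy)
    show "trans (theta J)" by (rule transI) (rule tr)
  qed simp
  have comp: "(c * a, c * b) \<in> theta J \<and> (a * c, b * c) \<in> theta J"
    if ab: "(a, b) \<in> theta J" for a b c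
  proof (cases "a = b")
    case True thus ?thesis using th by blast
  next
    case False
    note s1 = sub_mul[of c a 1] sub_mul[of c b 1] sub_mul[of 1 a c] sub_mul[of 1 b c]
    show ?thesis
    proof (cases "Jideal a \<subset> Jideal j \<and> Jideal b \<subset> Jideal j")
      case True thus ?thesis using s1 th by auto
    next
      case False
      with ab \<open>a \<noteq> b\<close> have aj: "Jideal a = Jideal j" "Jideal b = Jideal j"
        and L: "Lideal a = Lideal b" and R: "Rideal a = Rideal b"
        using th greenH_def greenL_def greenR_def by blast+
      have R1: "Rideal (c * a) = Rideal (c * b)" using R R_left_compat by blast
      have L1: "Lideal (a * c) = Lideal (b * c)" using L L_right_compat by blast
      have left: "(c * a, c * b) \<in> theta J"
      proof (cases "Jideal (c * a) = Jideal j")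
        case True
        hence "Jideal (c * b) = Jideal j" using R1 R_J by metis
        hence "Lideal (c * a) = Lideal a" "Lideal (c * b) = Lideal b"
          using True aj stabL by metis+
        thus ?thesis using th True \<open>Jideal (c * b) = Jideal j\<close> L R1
          unfolding greenH_def greenL_def greenR_def by metis
      next
        case False
        hence "Jideal (c * a) \<subset> Jideal j" using s1 aj by auto
        moreover have "Jideal (c * b) = Jideal (c * a)" using R1 R_J by metis
        ultimately show ?thesis using th by metis
      qed
      have right: "(a * c, b * c) \<in> theta J"
      proof (cases "Jideal (a * c) = Jideal j")
        case True
        hence "Jideal (b * c) = Jideal j" using L1 L_J by metis
        hence "Rideal (a * c) = Rideal a" "Rideal (b * c) = Rideal b"
          using True aj stabR by metis+
        thus ?thesis using th True \<open>Jideal (b * c) = Jideal j\<close> R L1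
          unfolding greenH_def greenL_def greenR_def by metis
      next
        case False
        hence "Jideal (a * c) \<subset> Jideal j" using s1 aj by auto
        moreover have "Jideal (b * c) = Jideal (a * c)" using L1 L_J by metis
        ultimately show ?thesis using th by metis
      qed
      show ?thesis using left right by blast
    qed
  qed
  show ?thesis using eq comp sub unfolding congruence_def by blast
qed

end
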